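(* For every $N\ge1$, the $\mathbb Q$-vector space $\mathcal{ZF}_N$ (taken over $\Bbbk=\mathbb Q$) has dimension $N-\lfloor N/2\rfloor=\lceil N/2\rceil$.
   Context: $\mathcal F_N$ is the free $\Bbbk$-module on symbols $F^{l,m,k}$, $l,m,k\ge0$, $l+m+k+1=N$; $\mathcal{ZF}_N:=\mathcal F_N/I$ with $I$ generated by all $F^{l,m,k}-F^{m,l,k}$ and all $F^{l,m+1,k}+F^{l+1,m,k}-F^{l,m,k+1}$. *)

theory Defs
  imports Complex_Main "HOL-Library.Function_Algebras"
begin

text \<open>Vectors of F_N are represented as rational-valued functions on index triples (l,m,k);
  the basis symbol F^{l,m,k} is the indicator function of (l,m,k).\<close>

type_synonym vec = "nat \<times> nat \<times> nat \<Rightarrow> rat"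

definition qscale :: "rat \<Rightarrow> vec \<Rightarrow> vec" where
  "qscale c f = (\<lambda>x. c * f x)"

definition Fsym :: "nat \<Rightarrow> nat \<Rightarrow> nat \<Rightarrow> vec" where
  "Fsym l m k = (\<lambda>x. if x = (l, m, k) then 1 else 0)"

definition FN :: "nat \<Rightarrow> vec set" where
  "FN N = module.span qscale {Fsym l m k | l m k. l + m + k + 1 = N}"

definition IN :: "nat \<Rightarrow> vec set" where
  "IN N = module.span qscale
     ({Fsym l m k - Fsym m l k | l m k. l + m + k + 1 = N} \<union>
      {Fsym l (m+1) k + Fsym (l+1) m k - Fsym l m (k+1) | l m k. l + m + k + 2 = N})"

text \<open>The quotient V/W (W a subspace of V) has dimension d iff there is a finite family
  B \<subseteq> V of d vectors whose classes form a basis of V/W: they are linearly independent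
  modulo W and together with W they span V.\<close>
definition quotient_dim :: "vec set \<Rightarrow> vec set \<Rightarrow> nat \<Rightarrow> bool" where
  "quotient_dim V W d \<longleftrightarrow>
     (\<exists>B. finite B \<and> card B = d \<and> B \<subseteq> V \<and>
        (\<forall>c. (\<Sum>b\<in>B. qscale (c b) b) \<in> W \<longrightarrow> (\<forall>b\<in>B. c b = 0)) \<and>
        V \<subseteq> module.span qscale (B \<union> W))"

definition ZF_dim :: "nat \<Rightarrow> nat \<Rightarrow> bool" where
  "ZF_dim N d \<longleftrightarrow> quotient_dim (FN N) (IN N) d"

end

theory Submission
  imports Defs
begin

lemma mod_q: "module qscale"
  by unfold_locales (auto simp: qscale_def fun_eq_iff algebra_simps)

interpretation Q: module qscale by (rule mod_q)

lemma sum_fun_apply: "finite A \<Longrightarrow> (sum g A) x = (\<Sum>b\<in>A. g b x)" for g :: "'b \<Rightarrow> vec"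
  by (induction A rule: finite_induct) auto

fun ff :: "nat \<Rightarrow> nat \<Rightarrow> nat \<Rightarrow> nat \<Rightarrow> rat" where
  "ff n a l 0 = (if l = a \<or> l = n - a then 1 else 0)"
| "ff n a l (Suc k) = ff n a l k + ff n a (Suc l) k"

lemma ff_sym: "a \<le> n \<Longrightarrow> l + k \<le> n \<Longrightarrow> ff n a l k = ff n a (n - l - k) k"
proof (induction k arbitrary: l)
  case 0
  then show ?case by auto
next
  case (Suc k)
  have i1: "ff n a l k = ff n a (n - l - k) k" using Suc.prems by (intro Suc.IH) auto
  have i2: "ff n a (Suc l) k = ff n a (n - Suc l - k) k" using Suc.prems by (intro Suc.IH) auto
  have e1: "n - l - k = Suc (n - l - Suc k)" using Suc.prems by simp
  have e2: "n - Suc l - k = n - l - Suc k" by simp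
  have "ff n a l (Suc k) = ff n a l k + ff n a (Suc l) k" by simp
  also have "\<dots> = ff n a (Suc (n - l - Suc k)) k + ff n a (n - l - Suc k) k"
    by (simp only: i1 i2 e1 e2)
  also have "\<dots> = ff n a (n - l - Suc k) (Suc k)" by simp
  finally show ?case .
qed

definition phi :: "nat \<Rightarrow> nat \<Rightarrow> vec \<Rightarrow> rat" where
  "phi n a v = (\<Sum>l\<le>n. \<Sum>k\<le>n - l. ff n a l k * v (l, n - l - k, k))"

lemma phi_add: "phi n a (v + w) = phi n a v + phi n a w"
  by (simp add: phi_def algebra_simps sum.distrib)

lemma phi_scale: "phi n a (qscale c v) = c * phi n a v"
  by (simp add: phi_def qscale_def sum_distrib_left algebra_simps)

lemma phi_zero: "phi n a 0 = 0"
  by (simp add: phi_def)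

lemma phi_diff: "phi n a (v - w) = phi n a v - phi n a w"
  by (simp add: phi_def algebra_simps sum_subtractf)

lemma phi_Fsym: assumes "l + m + k = n" shows "phi n a (Fsym l m k) = ff n a l k"
proof -
  have "phi n a (Fsym l m k) = (\<Sum>l'\<le>n. \<Sum>k'\<le>n - l'. if l' = l \<and> k' = k then ff n a l k else 0)"
    unfolding phi_def Fsym_def using assms
    by (intro sum.cong refl) auto
  also have "\<dots> = (\<Sum>l'\<le>n. if l' = l then ff n a l k else 0)"
    using assms by (intro sum.cong refl) (auto simp: sum.delta)
  also have "\<dots> = ff n a l k" using assms by (simp add: sum.delta)
  finally show ?thesis .
qed

lemma phi_IN: assumes "N = Suc n" "a \<le> n" "v \<in> IN N" shows "phi n a v = 0"
proof -
  have "Q.subspace {v. phi n a v = 0}"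
    by (rule Q.subspaceI) (auto simp: phi_add phi_scale phi_zero)
  moreover have "({Fsym l m k - Fsym m l k | l m k. l + m + k + 1 = N} \<union>
      {Fsym l (m+1) k + Fsym (l+1) m k - Fsym l m (k+1) | l m k. l + m + k + 2 = N})
      \<subseteq> {v. phi n a v = 0}"
  proof -
    have A1: "phi n a (Fsym l m k - Fsym m l k) = 0" if h: "l + m + k + 1 = N" for l m k
    proof -
      have "m = n - l - k" using h assms by simp
      then show ?thesis
        using h assms ff_sym[of a n l k] by (simp add: phi_diff phi_Fsym)
    qed
    have A2: "phi n a (Fsym l (m+1) k + Fsym (l+1) m k - Fsym l m (k+1)) = 0"
      if h: "l + m + k + 2 = N" for l m k
      using h assms by (simp add: phi_diff phi_add phi_Fsym)
    show ?thesis using A1 A2 by blast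
  qed
  ultimately have "IN N \<subseteq> {v. phi n a v = 0}"
    unfolding IN_def by (meson Q.span_minimal)
  then show ?thesis using assms by auto
qed

theorem mainTheorem5:
  fixes N :: nat
  assumes "N \<ge> 1"
  shows "ZF_dim N (N - N div 2)"
proof -
  obtain n where nN: "N = Suc n" using assms by (cases N) auto
  define A where "A = {a. n \<le> 2 * a \<and> a \<le> n}"
  define G where "G = (\<lambda>a. Fsym a (n - a) 0)"
  define B where "B = G ` A"
  have finA: "finite A" unfolding A_def by auto
  have injG: "inj_on G A"
    unfolding inj_on_def G_def Fsym_def A_def by (auto simp: fun_eq_iff)
  have A_eq: "A = {(n + 1) div 2 .. n}" unfolding A_def by auto
  have cardB: "card B = N - N div 2"
    unfolding B_def card_image[OF injG] using nN by (simp add: A_eq)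
  have finB: "finite B" unfolding B_def using finA by simp
  have BF: "B \<subseteq> FN N"
  proof
    fix b assume "b \<in> B"
    then obtain a where a: "a \<le> n" "b = Fsym a (n - a) 0" unfolding B_def G_def A_def by auto
    have "b \<in> {Fsym l m k | l m k. l + m + k + 1 = N}"
      using a nN by (intro CollectI exI[of _ a] exI[of _ "n - a"] exI[of _ 0]) auto
    then show "b \<in> FN N" unfolding FN_def by (rule Q.span_base)
  qed
  have indep: "\<forall>c. (\<Sum>b\<in>B. qscale (c b) b) \<in> IN N \<longrightarrow> (\<forall>b\<in>B. c b = 0)"
  proof (intro allI impI ballI)
    fix c b assume hs: "(\<Sum>b\<in>B. qscale (c b) b) \<in> IN N" and bB: "b \<in> B"
    then obtain a0 where a0: "a0 \<in> A" "b = G a0" unfolding B_def by auto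
    have "phi n a0 (\<Sum>b\<in>B. qscale (c b) b) = 0"
      using phi_IN[OF nN _ hs] a0 unfolding A_def by auto
    moreover have "phi n a0 (\<Sum>b\<in>B. qscale (c b) b) = (\<Sum>b\<in>B. c b * phi n a0 b)"
    proof -
      have "\<And>F. finite F \<Longrightarrow> phi n a0 (\<Sum>b\<in>F. qscale (c b) b) = (\<Sum>b\<in>F. c b * phi n a0 b)"
      proof -
        fix F :: "vec set" assume "finite F"
        then show "phi n a0 (\<Sum>b\<in>F. qscale (c b) b) = (\<Sum>b\<in>F. c b * phi n a0 b)"
        proof (induction F rule: finite_induct)
          case empty
          then show ?case by (simp only: sum.empty phi_zero)
        next
          case (insert x F)
          then show ?case by (simp only: sum.insert[OF insert.hyps] phi_add phi_scale)
        qed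
      qed
      then show ?thesis unfolding B_def using finA by auto
    qed
    moreover have "(\<Sum>b\<in>B. c b * phi n a0 b) = (\<Sum>a\<in>A. c (G a) * phi n a0 (G a))"
      unfolding B_def by (rule sum.reindex[OF injG, unfolded comp_def])
    moreover have "\<And>a. a \<in> A \<Longrightarrow> phi n a0 (G a) = (if a = a0 then 1 else 0)"
    proof -
      fix a assume "a \<in> A"
      then show "phi n a0 (G a) = (if a = a0 then 1 else 0)"
        using a0(1) unfolding G_def A_def by (subst phi_Fsym) auto
    qed
    moreover have "(\<Sum>a\<in>A. c (G a) * phi n a0 (G a)) = (\<Sum>a\<in>A. if a = a0 then c (G a) else 0)"
      by (rule sum.cong) (simp_all add: calculation(4))
    ultimately have "c (G a0) = 0"
      using a0(1) finA by (simp add: sum.delta)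
    then show "c b = 0" using a0 by simp
  qed
  let ?S = "Q.span (B \<union> IN N)"
  have INS: "IN N \<subseteq> ?S" by (meson Q.span_superset le_sup_iff)
  have gen: "\<And>l m. l + m + k = n \<Longrightarrow> Fsym l m k \<in> ?S" for k
  proof (induction k)
    case 0
    fix l m assume h: "l + m + 0 = n"
    show "Fsym l m 0 \<in> ?S"
    proof (cases "n \<le> 2 * l")
      case True
      then have "Fsym l m 0 \<in> B" unfolding B_def G_def A_def using h
        by (intro image_eqI[where x = l]) auto
      then show ?thesis by (simp add: Q.span_base)
    next
      case False
      then have "Fsym m l 0 \<in> B" unfolding B_def G_def A_def using h
        by (auto intro!: image_eqI[where x = m])
      then have m1: "Fsym m l 0 \<in> ?S" by (simp add: Q.span_base)
      have "Fsym l m 0 - Fsym m l 0 \<in> {Fsym l m k - Fsym m l k | l m k. l + m + k + 1 = N}"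
        using h nN by (intro CollectI exI[of _ l] exI[of _ m] exI[of _ 0]) auto
      then have "Fsym l m 0 - Fsym m l 0 \<in> IN N"
        unfolding IN_def by (intro Q.span_base UnI1)
      then have m2: "Fsym l m 0 - Fsym m l 0 \<in> ?S" using INS by auto
      show ?thesis using Q.span_add[OF m2 m1] by (simp only: diff_add_cancel)
    qed
  next
    case (Suc k)
    fix l m assume h: "l + m + Suc k = n"
    have "Fsym l (m+1) k + Fsym (l+1) m k - Fsym l m (k+1) \<in>
       {Fsym l (m+1) k + Fsym (l+1) m k - Fsym l m (k+1) | l m k. l + m + k + 2 = N}"
      using h nN by (intro CollectI exI[of _ l] exI[of _ m] exI[of _ k]) auto
    then have r: "Fsym l (m+1) k + Fsym (l+1) m k - Fsym l m (k+1) \<in> IN N"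
      unfolding IN_def by (intro Q.span_base UnI2)
    then have r2: "Fsym l (m+1) k + Fsym (l+1) m k - Fsym l m (k+1) \<in> ?S" using INS by auto
    have a1: "Fsym l (m+1) k \<in> ?S" using Suc.IH h by simp
    have a2: "Fsym (l+1) m k \<in> ?S" using Suc.IH h by simp
    show "Fsym l m (Suc k) \<in> ?S"
      using Q.span_diff[OF Q.span_add[OF a1 a2] r2] by (simp only: diff_diff_eq2 add_diff_cancel_left' Suc_eq_plus1)
  qed
  have "FN N \<subseteq> ?S"
    unfolding FN_def
    by (rule Q.span_minimal) (use gen nN in auto)
  then show ?thesis
    unfolding ZF_dim_def quotient_dim_def
    using finB cardB BF indep by blast
qed

end
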